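(* Let $m$ and $k$ be positive integers such that $2m-1<R(m-k,3)$ and $m\ge k+3$. Then $F_v(2_r;r-k+1)\le r+m$ for every integer $r\ge m-1$.
   Context: All graphs are finite, simple and undirected. $\mathrm{cl}(G)$ is the clique number of $G$. $G\overset{v}{\to}(2_r)$ means that in every partition of $V(G)$ into $r$ pairwise disjoint parts some part contains an edge (equivalently $\chi(G)\ge r+1$). $H_v(2_r;q)$ is the set of graphs $G$ with $G\overset{v}{\to}(2_r)$ and $\mathrm{cl}(G)<q$; $F_v(2_r;q)=\min\{|V(G)|:G\in H_v(2_r;q)\}$. The Ramsey number $R(p,3)$ is the least $n$ such that every graph on at least $n$ vertices has a $p$-clique or an independent set of size $3$. *)

theory Defs
  imports Main
begin

text \<open>Finite simple graphs, represented with vertex set V :: nat set (every finite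
graph is isomorphic to one on natural numbers) and edge set E of 2-element subsets of V.\<close>

definition simple_graph :: "nat set \<Rightarrow> nat set set \<Rightarrow> bool" where
  "simple_graph V E \<longleftrightarrow> finite V \<and> (\<forall>e\<in>E. e \<subseteq> V \<and> card e = 2)"

definition is_clique :: "nat set \<Rightarrow> nat set set \<Rightarrow> nat set \<Rightarrow> bool" where
  "is_clique V E S \<longleftrightarrow> S \<subseteq> V \<and> (\<forall>x\<in>S. \<forall>y\<in>S. x \<noteq> y \<longrightarrow> {x, y} \<in> E)"

definition is_indep :: "nat set \<Rightarrow> nat set set \<Rightarrow> nat set \<Rightarrow> bool" where
  "is_indep V E S \<longleftrightarrow> S \<subseteq> V \<and> (\<forall>x\<in>S. \<forall>y\<in>S. x \<noteq> y \<longrightarrow> {x, y} \<notin> E)"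

definition clique_number :: "nat set \<Rightarrow> nat set set \<Rightarrow> nat" where
  "clique_number V E = Max (card ` {S. is_clique V E S})"

text \<open>G -v-> (2_r): every partition of V into r pairwise disjoint (possibly empty)
parts has a part containing an edge; a partition into r parts is given by a map
V \<rightarrow> {0..<r}.\<close>
definition vertex_arrow :: "nat set \<Rightarrow> nat set set \<Rightarrow> nat \<Rightarrow> bool" where
  "vertex_arrow V E r \<longleftrightarrow>
     (\<forall>f :: nat \<Rightarrow> nat. f ` V \<subseteq> {..<r} \<longrightarrow>
        (\<exists>x\<in>V. \<exists>y\<in>V. x \<noteq> y \<and> f x = f y \<and> {x, y} \<in> E))"

definition Hv :: "nat \<Rightarrow> nat \<Rightarrow> (nat set \<times> nat set set) set" where
  "Hv r q = {(V, E). simple_graph V E \<and> vertex_arrow V E r \<and> clique_number V E < q}"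

definition Fv :: "nat \<Rightarrow> nat \<Rightarrow> nat" where
  "Fv r q = (LEAST n. \<exists>(V, E) \<in> Hv r q. card V = n)"

definition ramsey_R :: "nat \<Rightarrow> nat \<Rightarrow> nat" where
  "ramsey_R p s = (LEAST n. \<forall>V E. simple_graph V E \<and> card V \<ge> n \<longrightarrow>
      (\<exists>S. is_clique V E S \<and> card S = p) \<or> (\<exists>S. is_indep V E S \<and> card S = s))"

end

theory Submission
  imports Defs
begin

theorem theorem2p1:
  fixes m k r :: nat
  assumes "0 < m" and "0 < k"
    and "2 * m - 1 < ramsey_R (m - k) 3"
    and "m \<ge> k + 3"
    and "r \<ge> m - 1"
  shows "Hv r (r + 1 - k) \<noteq> {} \<and> Fv r (r + 1 - k) \<le> r + m"
proof -
  define p where "p = m - k"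
  define s where "s = r + 1 - m"
  have "\<not> (\<forall>V E. simple_graph V E \<and> card V \<ge> 2*m-1 \<longrightarrow>
      (\<exists>S. is_clique V E S \<and> card S = p) \<or> (\<exists>S. is_indep V E S \<and> card S = 3))"
    using not_less_Least[OF assms(3)[unfolded ramsey_R_def]] p_def by blast
  then obtain V E where sg: "simple_graph V E" and cV: "card V \<ge> 2*m-1"
    and noC: "\<And>S. is_clique V E S \<Longrightarrow> card S \<noteq> p"
    and noI: "\<And>S. is_indep V E S \<Longrightarrow> card S \<noteq> 3" by blast
  have finV: "finite V" using sg simple_graph_def by blast
  obtain W where WV: "W \<subseteq> V" and cW: "card W = 2*m-1" and finW: "finite W"
    using obtain_subset_with_card_n[OF cV] by blast
  obtain N where NV: "\<forall>x\<in>V. x < N" using finV by (metis Max_ge le_imp_less_Suc)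
  define K where "K = {N..<N+s}"
  have finK: "finite K" and cK: "card K = s" unfolding K_def by auto
  have disj: "W \<inter> K = {}" using NV WV unfolding K_def by fastforce
  define V' where "V' = W \<union> K"
  define E' where "E' = {e\<in>E. e \<subseteq> W} \<union> {{x,y}|x y. x\<in>K \<and> y\<in>V' \<and> x\<noteq>y}"
  have finV': "finite V'" using finW finK V'_def by auto
  have cV': "card V' = r + m" unfolding V'_def
    using card_Un_disjoint[OF finW finK disj] cW cK s_def assms by auto
  have WE: "{x,y} \<in> E" if "x \<in> W" "y \<in> W" "{x,y} \<in> E'" for x y
  proof -
    have "\<not> (\<exists>a b. {x,y} = {a,b} \<and> a \<in> K)" using that(1,2) disj
      by (auto simp: doubleton_eq_iff)
    then show ?thesis using that(3) unfolding E'_def by blast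
  qed
  have EW: "{x,y} \<in> E'" if "x \<in> W" "y \<in> W" "{x,y} \<in> E" for x y
    using that unfolding E'_def by auto
  have KE: "{x,y} \<in> E'" if "x \<in> K" "y \<in> V'" "x \<noteq> y" for x y
    using that unfolding E'_def by blast
  have sg': "simple_graph V' E'"
    unfolding simple_graph_def
  proof (intro conjI)
    show "finite V'" by (rule finV')
  next
    show "\<forall>e\<in>E'. e \<subseteq> V' \<and> card e = 2"
    proof
    fix e assume e: "e \<in> E'"
    show "e \<subseteq> V' \<and> card e = 2"
    proof (cases "e \<in> E \<and> e \<subseteq> W")
      case True then show ?thesis using sg unfolding simple_graph_def V'_def by auto
    next
      case False
      then obtain x y where "e = {x,y}" "x \<in> K" "y \<in> V'" "x \<noteq> y" using e unfolding E'_def by blast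
      then show ?thesis unfolding V'_def by auto
    qed
    qed
  qed
  have clq: "card S \<le> r - k" if S: "is_clique V' E' S" for S
  proof -
    have SV: "S \<subseteq> V'" using S is_clique_def by blast
    have finS: "finite S" using SV finV' finite_subset by blast
    have lt: "card (S \<inter> W) < p"
    proof (rule ccontr)
      assume "\<not> ?thesis"
      then have "p \<le> card (S \<inter> W)" by simp
      then obtain T where T: "T \<subseteq> S \<inter> W" "card T = p"
        by (rule obtain_subset_with_card_n)
      have "is_clique V E T" unfolding is_clique_def
      proof (intro conjI ballI impI)
        show "T \<subseteq> V" using T WV by blast
      next
        fix x y assume "x \<in> T" "y \<in> T" "x \<noteq> y"
        then show "{x,y} \<in> E" using WE T S unfolding is_clique_def by blast
      qed
      then show False using noC T by blast
    qed
    have "S = (S \<inter> W) \<union> (S \<inter> K)" using SV V'_def by blast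
    then have "card S \<le> card (S \<inter> W) + card (S \<inter> K)"
      by (metis card_Un_le)
    also have "card (S \<inter> K) \<le> s" using cK finK by (metis card_mono inf_le2)
    finally show ?thesis using lt p_def s_def assms by linarith
  qed
  have cln: "clique_number V' E' < r + 1 - k"
  proof -
    have fin: "finite {S. is_clique V' E' S}"
      by (rule finite_subset[of _ "Pow V'"]) (auto simp: is_clique_def finV')
    have ne: "{} \<in> {S. is_clique V' E' S}" by (simp add: is_clique_def)
    show ?thesis unfolding clique_number_def
    proof (subst Max_less_iff)
      show "finite (card ` {S. is_clique V' E' S})" using fin by simp
      show "card ` {S. is_clique V' E' S} \<noteq> {}" using ne by blast
      show "\<forall>a\<in>card ` {S. is_clique V' E' S}. a < r + 1 - k"
      proof
        fix a assume "a \<in> card ` {S. is_clique V' E' S}"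
        then obtain S where "is_clique V' E' S" "a = card S" by blast
        then have "a \<le> r - k" using clq by blast
        then show "a < r + 1 - k" using assms by linarith
      qed
    qed
  qed
  have arrow: "vertex_arrow V' E' r"
    unfolding vertex_arrow_def
  proof (intro allI impI)
    fix f :: "nat \<Rightarrow> nat"
    assume fV: "f ` V' \<subseteq> {..<r}"
    show "\<exists>x\<in>V'. \<exists>y\<in>V'. x \<noteq> y \<and> f x = f y \<and> {x, y} \<in> E'"
    proof (rule ccontr)
      assume "\<not> ?thesis"
      then have pr: "\<And>x y. x \<in> V' \<Longrightarrow> y \<in> V' \<Longrightarrow> x \<noteq> y \<Longrightarrow> f x = f y \<Longrightarrow> {x,y} \<notin> E'"
        by blast
      have inj: "inj_on f K"
        by (rule inj_onI, rule ccontr) (use pr KE V'_def in blast)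
      have cfK: "card (f ` K) = s" using card_image[OF inj] cK by simp
      have dj: "f ` K \<inter> f ` W = {}"
      proof (rule ccontr)
        assume "\<not> ?thesis"
        then obtain x y where "x \<in> K" "y \<in> W" "f x = f y" by blast
        moreover have "x \<noteq> y" using calculation disj by blast
        ultimately show False using pr KE V'_def by blast
      qed
      have sub: "f ` W \<subseteq> {..<r} - f ` K" using fV dj V'_def by blast
      have fKr: "f ` K \<subseteq> {..<r}" using fV V'_def by blast
      have "card (f ` W) \<le> card ({..<r} - f ` K)"
        by (rule card_mono[OF _ sub]) simp
      also have "\<dots> = r - s" using card_Diff_subset[OF _ fKr] cfK finK by simp
      finally have cfW: "card (f ` W) \<le> m - 1" using s_def assms by linarith
      have fib: "card {x\<in>W. f x = c} \<le> 2" for c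
      proof (rule ccontr)
        assume "\<not> ?thesis"
        then have "3 \<le> card {x\<in>W. f x = c}" by simp
        then obtain T where T: "T \<subseteq> {x\<in>W. f x = c}" "card T = 3"
          by (rule obtain_subset_with_card_n)
        have "is_indep V E T" unfolding is_indep_def
        proof (intro conjI ballI impI)
          show "T \<subseteq> V" using T WV by blast
        next
          fix x y assume xy: "x \<in> T" "y \<in> T" "x \<noteq> y"
          show "{x,y} \<notin> E"
          proof
            assume "{x,y} \<in> E"
            then have "{x,y} \<in> E'" using EW xy T by blast
            then show False using pr[of x y] xy T V'_def by blast
          qed
        qed
        then show False using noI T by blast
      qed
      have "W = (\<Union>c\<in>f ` W. {x\<in>W. f x = c})" by blast
      then have "card W \<le> (\<Sum>c\<in>f ` W. card {x\<in>W. f x = c})"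
        by (metis card_UN_le finW finite_imageI)
      also have "\<dots> \<le> (\<Sum>c\<in>f ` W. 2)" by (rule sum_mono) (rule fib)
      also have "\<dots> = 2 * card (f ` W)" by simp
      finally show False using cW cfW assms by linarith
    qed
  qed
  have inH: "(V', E') \<in> Hv r (r + 1 - k)"
    unfolding Hv_def using sg' arrow cln by blast
  have "Fv r (r + 1 - k) \<le> card V'"
    unfolding Fv_def by (rule Least_le) (use inH in blast)
  then show ?thesis using inH cV' by auto
qed

end
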